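(* Let $L$ be a lattice with almost permutable congruences. Then $\operatorname{Con}_c L$ satisfies $\mathrm{URP}_1^-$ at every principal congruence $\Theta_L(u,v)$, $u,v\in L$.
   Context: Two congruences $\alpha,\beta$ of a lattice are almost permutable if $\alpha\vee\beta=\alpha\beta\cup\beta\alpha$, where $\alpha\beta=\{(x,y): \exists z,\ (x,z)\in\alpha,\ (z,y)\in\beta\}$; $L$ has almost permutable congruences if any two of its congruences are almost permutable. $\operatorname{Con}_c L$ is the $\{\vee,0\}$-semilattice of compact congruences of $L$, and $\Theta_L(u,v)$ is the least congruence identifying $u,v$. Let $S$ be a join-semilattice, $\varepsilon\in S$, and $\sigma=((\alpha_i,\beta_i))_{i\in I}$ a family in $S\times S$ with $\alpha_i\vee\beta_i=\varepsilon$ for all $i$. $S$ satisfies $\mathrm{URP}_1^-$ at $\sigma$ if there exist a subset $X\subseteq I$, a family $((\alpha_i^*,\beta_i^* ))_{i\in I}$ in $S\times S$ and a family $(\gamma_{i,j})_{(i,j)\in I\times I}$ in $S$ such that: (i) $\alpha_i^*\leq\alpha_i$, $\beta_i^*\leq\beta_i$, $\alpha_i^*\vee\beta_i^*=\varepsilon$ for all $i$; (ii) $\gamma_{i,j}\leq\alpha_i^*$ and $\gamma_{i,j}\leq\beta_j^*$ for all $i,j$; (iii) $\alpha_i^*\leq\alpha_j^*\vee\gamma_{i,j}$ and $\beta_j^*\leq\beta_i^*\vee\gamma_{i,j}$ for all $i,j$; (iv) $\gamma_{i,k}\leq\gamma_{i,j}\vee\gamma_{j,k}$ for all $i,j,k\in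 I$ such that ($\{i,k\}\subseteq X\Rightarrow j\in X$) and ($\{i,k\}\subseteq I\setminus X\Rightarrow j\in I\setminus X$). $S$ satisfies $\mathrm{URP}_1^-$ at $\varepsilon$ if it satisfies $\mathrm{URP}_1^-$ at every such family $\sigma$ with $\alpha_i\vee\beta_i=\varepsilon$ for all $i$. *)

theory Defs
  imports Main
begin

definition lattice_cong :: "('a::lattice \<times> 'a) set \<Rightarrow> bool" where
  "lattice_cong \<theta> \<longleftrightarrow> equiv UNIV \<theta> \<and>
     (\<forall>a b c d. (a, b) \<in> \<theta> \<and> (c, d) \<in> \<theta> \<longrightarrow>
        (sup a c, sup b d) \<in> \<theta> \<and> (inf a c, inf b d) \<in> \<theta>)"

definition Cg :: "('a::lattice \<times> 'a) set \<Rightarrow> ('a \<times> 'a) set" where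
  "Cg R = \<Inter>{\<theta>. lattice_cong \<theta> \<and> R \<subseteq> \<theta>}"

definition Theta :: "'a::lattice \<Rightarrow> 'a \<Rightarrow> ('a \<times> 'a) set" where
  "Theta u v = Cg {(u, v)}"

definition cong_join :: "('a::lattice \<times> 'a) set \<Rightarrow> ('a \<times> 'a) set \<Rightarrow> ('a \<times> 'a) set" where
  "cong_join \<alpha> \<beta> = Cg (\<alpha> \<union> \<beta>)"

definition Con_c :: "('a::lattice \<times> 'a) set set" where
  "Con_c = {\<theta>. lattice_cong \<theta> \<and>
     (\<forall>A. (\<forall>\<phi>\<in>A. lattice_cong \<phi>) \<and> \<theta> \<subseteq> Cg (\<Union>A) \<longrightarrow>
        (\<exists>B\<subseteq>A. finite B \<and> \<theta> \<subseteq> Cg (\<Union>B)))}"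

definition almost_permutable :: "('a::lattice \<times> 'a) set \<Rightarrow> ('a \<times> 'a) set \<Rightarrow> bool" where
  "almost_permutable \<alpha> \<beta> \<longleftrightarrow> cong_join \<alpha> \<beta> = (\<alpha> O \<beta>) \<union> (\<beta> O \<alpha>)"

definition has_almost_permutable_congruences :: "'a::lattice itself \<Rightarrow> bool" where
  "has_almost_permutable_congruences (_::'a itself) \<longleftrightarrow>
     (\<forall>\<alpha> \<beta> :: ('a \<times> 'a) set. lattice_cong \<alpha> \<and> lattice_cong \<beta> \<longrightarrow> almost_permutable \<alpha> \<beta>)"

text \<open>URP_1^- at a family sigma = ((alpha i, beta i))_{i in I} (with alpha i join beta i = eps)
  in a join-semilattice given by carrier S, join jn and order le: conditions (i)-(iv).\<close>
definition URP1m_at_family ::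
  "'s set \<Rightarrow> ('s \<Rightarrow> 's \<Rightarrow> 's) \<Rightarrow> ('s \<Rightarrow> 's \<Rightarrow> bool) \<Rightarrow> 's \<Rightarrow> 'i set \<Rightarrow> ('i \<Rightarrow> 's) \<Rightarrow> ('i \<Rightarrow> 's) \<Rightarrow> bool" where
  "URP1m_at_family S jn le eps I \<alpha> \<beta> \<longleftrightarrow>
     (\<exists>X \<alpha>' \<beta>' \<gamma>. X \<subseteq> I \<and>
       (\<forall>i\<in>I. \<alpha>' i \<in> S \<and> \<beta>' i \<in> S \<and> le (\<alpha>' i) (\<alpha> i) \<and> le (\<beta>' i) (\<beta> i) \<and>
               jn (\<alpha>' i) (\<beta>' i) = eps) \<and>
       (\<forall>i\<in>I. \<forall>j\<in>I. \<gamma> i j \<in> S \<and> le (\<gamma> i j) (\<alpha>' i) \<and> le (\<gamma> i j) (\<beta>' j)) \<and>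
       (\<forall>i\<in>I. \<forall>j\<in>I. le (\<alpha>' i) (jn (\<alpha>' j) (\<gamma> i j)) \<and> le (\<beta>' j) (jn (\<beta>' i) (\<gamma> i j))) \<and>
       (\<forall>i\<in>I. \<forall>j\<in>I. \<forall>k\<in>I.
          (({i, k} \<subseteq> X \<longrightarrow> j \<in> X) \<and> ({i, k} \<subseteq> I - X \<longrightarrow> j \<in> I - X)) \<longrightarrow>
          le (\<gamma> i k) (jn (\<gamma> i j) (\<gamma> j k))))"

end

theory Submission
  imports Defs
begin

lemma lc_intro:
  assumes "\<And>x. (x,x)\<in>\<theta>" "\<And>x y. (x,y)\<in>\<theta> \<Longrightarrow> (y,x)\<in>\<theta>"
    "\<And>x y z. (x,y)\<in>\<theta> \<Longrightarrow> (y,z)\<in>\<theta> \<Longrightarrow> (x,z)\<in>\<theta>"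
    "\<And>a b c d. (a,b)\<in>\<theta> \<Longrightarrow> (c,d)\<in>\<theta> \<Longrightarrow> (sup a c, sup b d)\<in>\<theta>"
    "\<And>a b c d. (a,b)\<in>\<theta> \<Longrightarrow> (c,d)\<in>\<theta> \<Longrightarrow> (inf a c, inf b d)\<in>\<theta>"
  shows "lattice_cong \<theta>"
  unfolding lattice_cong_def equiv_def
proof (intro conjI allI impI)
  show "refl_on UNIV \<theta>" unfolding refl_on_def using assms(1) by blast
  show "sym \<theta>" by (rule symI) (rule assms(2))
  show "trans \<theta>" by (rule transI) (rule assms(3))
qed (auto intro: assms(4,5))

context
  fixes \<theta> :: "('a::lattice \<times> 'a) set"
  assumes C: "lattice_cong \<theta>"
begin
lemma R: "(x,x)\<in>\<theta>" using C unfolding lattice_cong_def equiv_def refl_on_def by blast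
lemma S: "(x,y)\<in>\<theta> \<Longrightarrow> (y,x)\<in>\<theta>" using C unfolding lattice_cong_def equiv_def by (meson symD)
lemma T: "(x,y)\<in>\<theta> \<Longrightarrow> (y,z)\<in>\<theta> \<Longrightarrow> (x,z)\<in>\<theta>" using C unfolding lattice_cong_def equiv_def by (meson transD)
lemma SUP: "(a,b)\<in>\<theta> \<Longrightarrow> (c,d)\<in>\<theta> \<Longrightarrow> (sup a c, sup b d)\<in>\<theta>" using C unfolding lattice_cong_def by blast
lemma INF: "(a,b)\<in>\<theta> \<Longrightarrow> (c,d)\<in>\<theta> \<Longrightarrow> (inf a c, inf b d)\<in>\<theta>" using C unfolding lattice_cong_def by blast
lemma infR: "(x,y)\<in>\<theta> \<Longrightarrow> (inf x c, inf y c)\<in>\<theta>" by (rule INF, assumption, rule R)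
lemma infL: "(x,y)\<in>\<theta> \<Longrightarrow> (inf c x, inf c y)\<in>\<theta>" by (rule INF, rule R, assumption)
lemma supR: "(x,y)\<in>\<theta> \<Longrightarrow> (sup x c, sup y c)\<in>\<theta>" by (rule SUP, assumption, rule R)
lemma supL: "(x,y)\<in>\<theta> \<Longrightarrow> (sup c x, sup c y)\<in>\<theta>" by (rule SUP, rule R, assumption)
end

lemma Cg_elem: "(x,y)\<in>Cg R \<longleftrightarrow> (\<forall>\<theta>. lattice_cong \<theta> \<and> R \<subseteq> \<theta> \<longrightarrow> (x,y)\<in>\<theta>)"
  unfolding Cg_def by blast

lemma Cg_cong: "lattice_cong (Cg R)"
proof (rule lc_intro)
  fix x show "(x,x) \<in> Cg R" unfolding Cg_elem using R by blast
next
  fix x y assume h: "(x,y)\<in>Cg R" show "(y,x)\<in>Cg R" unfolding Cg_elem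
  proof (intro allI impI)
    fix \<theta> assume th: "lattice_cong \<theta> \<and> R \<subseteq> \<theta>"
    then have "(x,y)\<in>\<theta>" using h unfolding Cg_elem by blast
    then show "(y,x)\<in>\<theta>" using th by (intro S[of \<theta> x y]) auto
  qed
next
  fix x y z assume h: "(x,y)\<in>Cg R" "(y,z)\<in>Cg R" show "(x,z)\<in>Cg R" unfolding Cg_elem
  proof (intro allI impI)
    fix \<theta> assume th: "lattice_cong \<theta> \<and> R \<subseteq> \<theta>"
    then have "(x,y)\<in>\<theta>" "(y,z)\<in>\<theta>" using h unfolding Cg_elem by blast+
    then show "(x,z)\<in>\<theta>" using th T[of \<theta> x y z] by blast
  qed
next
  fix a b c d assume h: "(a,b)\<in>Cg R" "(c,d)\<in>Cg R" show "(sup a c, sup b d)\<in>Cg R" unfolding Cg_elem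
  proof (intro allI impI)
    fix \<theta> assume th: "lattice_cong \<theta> \<and> R \<subseteq> \<theta>"
    then have "(a,b)\<in>\<theta>" "(c,d)\<in>\<theta>" using h unfolding Cg_elem by blast+
    then show "(sup a c, sup b d)\<in>\<theta>" using th SUP[of \<theta> a b c d] by blast
  qed
next
  fix a b c d assume h: "(a,b)\<in>Cg R" "(c,d)\<in>Cg R" show "(inf a c, inf b d)\<in>Cg R" unfolding Cg_elem
  proof (intro allI impI)
    fix \<theta> assume th: "lattice_cong \<theta> \<and> R \<subseteq> \<theta>"
    then have "(a,b)\<in>\<theta>" "(c,d)\<in>\<theta>" using h unfolding Cg_elem by blast+
    then show "(inf a c, inf b d)\<in>\<theta>" using th INF[of \<theta> a b c d] by blast
  qed
qed

lemma Cg_sub: "R \<subseteq> Cg R" unfolding Cg_def by auto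
lemma Cg_least: "lattice_cong \<theta> \<Longrightarrow> R \<subseteq> \<theta> \<Longrightarrow> Cg R \<subseteq> \<theta>" unfolding Cg_def by auto
lemma Cg_mono: "R \<subseteq> R' \<Longrightarrow> Cg R \<subseteq> Cg R'" unfolding Cg_def by auto

lemma Theta_mem: "(p,q) \<in> Theta p q" unfolding Theta_def using Cg_sub by auto
lemma Theta_le: "lattice_cong \<theta> \<Longrightarrow> (p,q)\<in>\<theta> \<Longrightarrow> Theta p q \<subseteq> \<theta>"
  unfolding Theta_def by (rule Cg_least) auto
lemma Theta_cong: "lattice_cong (Theta p q)" unfolding Theta_def by (rule Cg_cong)

lemma cj_cong: "lattice_cong (cong_join A B)" unfolding cong_join_def by (rule Cg_cong)
lemma cj_ub1: "A \<subseteq> cong_join A B" unfolding cong_join_def using Cg_sub[of "A \<union> B"] by blast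
lemma cj_ub2: "B \<subseteq> cong_join A B" unfolding cong_join_def using Cg_sub[of "A \<union> B"] by blast
lemma cj_least: "lattice_cong \<theta> \<Longrightarrow> A \<subseteq> \<theta> \<Longrightarrow> B \<subseteq> \<theta> \<Longrightarrow> cong_join A B \<subseteq> \<theta>"
  unfolding cong_join_def by (rule Cg_least) auto

lemma Theta_le_join:
  assumes "\<And>\<theta>. lattice_cong \<theta> \<Longrightarrow> (r,s)\<in>\<theta> \<Longrightarrow> (t,w)\<in>\<theta> \<Longrightarrow> (p,q)\<in>\<theta>"
  shows "Theta p q \<subseteq> cong_join (Theta r s) (Theta t w)"
  apply (rule Theta_le[OF cj_cong])
  apply (rule assms[OF cj_cong])
   apply (rule subsetD[OF cj_ub1 Theta_mem])
  apply (rule subsetD[OF cj_ub2 Theta_mem])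
  done

lemma Theta_le_Theta:
  assumes "\<And>\<theta>. lattice_cong \<theta> \<Longrightarrow> (r,s)\<in>\<theta> \<Longrightarrow> (p,q)\<in>\<theta>"
  shows "Theta p q \<subseteq> Theta r s"
  by (rule Theta_le[OF Theta_cong]) (rule assms[OF Theta_cong Theta_mem])

lemma Theta_compact: "Theta p q \<in> Con_c"
  unfolding Con_c_def
proof (intro CollectI conjI allI impI)
  show "lattice_cong (Theta p q)" by (rule Theta_cong)
  fix A :: "('a \<times> 'a) set set"
  assume H: "(\<forall>\<phi>\<in>A. lattice_cong \<phi>) \<and> Theta p q \<subseteq> Cg (\<Union> A)"
  define D where "D = {pr. \<exists>B. B \<subseteq> A \<and> finite B \<and> pr \<in> Cg (\<Union>B)}"
  have memD: "pr \<in> D \<longleftrightarrow> (\<exists>B. B \<subseteq> A \<and> finite B \<and> pr \<in> Cg (\<Union>B))" for pr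
    unfolding D_def by (rule mem_Collect_eq)
  have two: "\<exists>B. B \<subseteq> A \<and> finite B \<and> (x,y) \<in> Cg (\<Union>B) \<and> (x',y') \<in> Cg (\<Union>B)"
    if h1: "(x,y)\<in>D" and h2: "(x',y')\<in>D" for x y x' y'
  proof -
    obtain B1 where B1: "B1 \<subseteq> A" "finite B1" "(x,y) \<in> Cg (\<Union>B1)" using memD[THEN iffD1, OF h1] by (elim exE conjE)
    obtain B2 where B2: "B2 \<subseteq> A" "finite B2" "(x',y') \<in> Cg (\<Union>B2)" using memD[THEN iffD1, OF h2] by (elim exE conjE)
    have s1: "Cg (\<Union>B1) \<subseteq> Cg (\<Union>(B1\<union>B2))" by (rule Cg_mono) (rule Union_mono, rule Un_upper1)
    have s2: "Cg (\<Union>B2) \<subseteq> Cg (\<Union>(B1\<union>B2))" by (rule Cg_mono) (rule Union_mono, rule Un_upper2)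
    show ?thesis
    proof (intro exI conjI)
      show "B1 \<union> B2 \<subseteq> A" using B1(1) B2(1) by (rule Un_least)
      show "finite (B1 \<union> B2)" using B1(2) B2(2) by (rule finite_UnI)
      show "(x,y) \<in> Cg (\<Union>(B1\<union>B2))" by (rule subsetD[OF s1 B1(3)])
      show "(x',y') \<in> Cg (\<Union>(B1\<union>B2))" by (rule subsetD[OF s2 B2(3)])
    qed
  qed
  have mk: "pr \<in> D" if "B \<subseteq> A" "finite B" "pr \<in> Cg (\<Union>B)" for B pr
    unfolding memD using that by (intro exI[of _ B] conjI)
  have "lattice_cong D"
  proof (rule lc_intro)
    fix x show "(x,x)\<in>D" by (rule mk[of "{}"]) (simp_all add: R[OF Cg_cong])
  next
    fix x y assume "(x,y)\<in>D"
    then obtain B where B: "B \<subseteq> A" "finite B" "(x,y) \<in> Cg (\<Union>B)" using memD[THEN iffD1, OF \<open>(x,y)\<in>D\<close>] by blast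
    show "(y,x)\<in>D" by (rule mk[OF B(1,2) S[OF Cg_cong B(3)]])
  next
    fix x y z assume "(x,y)\<in>D" "(y,z)\<in>D"
    then obtain B where B: "B \<subseteq> A" "finite B" "(x,y) \<in> Cg (\<Union>B)" "(y,z) \<in> Cg (\<Union>B)"
      using two[OF \<open>(x,y)\<in>D\<close> \<open>(y,z)\<in>D\<close>] by blast
    show "(x,z)\<in>D" by (rule mk[OF B(1,2) T[OF Cg_cong B(3,4)]])
  next
    fix a b c d assume "(a,b)\<in>D" "(c,d)\<in>D"
    then obtain B where B: "B \<subseteq> A" "finite B" "(a,b) \<in> Cg (\<Union>B)" "(c,d) \<in> Cg (\<Union>B)"
      using two[OF \<open>(a,b)\<in>D\<close> \<open>(c,d)\<in>D\<close>] by blast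
    show "(sup a c, sup b d)\<in>D" by (rule mk[OF B(1,2) SUP[OF Cg_cong B(3,4)]])
  next
    fix a b c d assume "(a,b)\<in>D" "(c,d)\<in>D"
    then obtain B where B: "B \<subseteq> A" "finite B" "(a,b) \<in> Cg (\<Union>B)" "(c,d) \<in> Cg (\<Union>B)"
      using two[OF \<open>(a,b)\<in>D\<close> \<open>(c,d)\<in>D\<close>] by blast
    show "(inf a c, inf b d)\<in>D" by (rule mk[OF B(1,2) INF[OF Cg_cong B(3,4)]])
  qed
  moreover have "\<Union>A \<subseteq> D"
  proof
    fix z assume "z \<in> \<Union>A"
    then obtain \<phi> where ph: "\<phi>\<in>A" "z\<in>\<phi>" by (rule UnionE)
    have z: "z \<in> Cg (\<Union>{\<phi>})" using Cg_sub[of "\<Union>{\<phi>}"] ph(2) by auto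
    show "z \<in> D" by (rule mk[of "{\<phi>}"]) (use ph(1) z in auto)
  qed
  ultimately have sub: "Cg (\<Union>A) \<subseteq> D" by (rule Cg_least)
  have "(p,q) \<in> Cg (\<Union>A)" using H Theta_mem[of p q] by auto
  then have "(p,q) \<in> D" by (rule subsetD[OF sub])
  then obtain B where B: "B \<subseteq> A" "finite B" "(p,q) \<in> Cg (\<Union>B)" using memD[THEN iffD1, OF \<open>(p,q)\<in>D\<close>] by blast
  have "Theta p q \<subseteq> Cg (\<Union>B)" by (rule Theta_le[OF Cg_cong B(3)])
  then show "\<exists>B\<subseteq>A. finite B \<and> Theta p q \<subseteq> Cg (\<Union> B)"
    using B(1,2) by auto
qed

context
  fixes \<theta> :: "('a::lattice \<times> 'a) set"
  assumes C: "lattice_cong \<theta>"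
begin
lemmas S' = S[OF C] and T' = T[OF C] and infR' = infR[OF C] and infL' = infL[OF C]
  and supR' = supR[OF C] and supL' = supL[OF C]

lemma XXii1: "a \<le> y \<Longrightarrow> (a,x)\<in>\<theta> \<Longrightarrow> (inf x y, x)\<in>\<theta>"
proof -
  assume o: "a \<le> y" and h: "(a,x)\<in>\<theta>"
  have "(inf x y, inf a y)\<in>\<theta>" by (rule infR'[OF S'[OF h]])
  then have "(inf x y, a)\<in>\<theta>" using o by (simp add: inf_absorb1)
  then show ?thesis using h by (rule T')
qed
lemma XXii2: "x \<le> b \<Longrightarrow> (y,b)\<in>\<theta> \<Longrightarrow> (inf x y, x)\<in>\<theta>"
proof -
  assume o: "x \<le> b" and h: "(y,b)\<in>\<theta>"
  have "(inf x y, inf x b)\<in>\<theta>" by (rule infL'[OF h])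
  then show ?thesis using o by (simp add: inf_absorb1)
qed
lemma XXiii1: "a \<le> x \<Longrightarrow> (a,y)\<in>\<theta> \<Longrightarrow> (inf x y, x)\<in>\<theta> \<Longrightarrow> (a,x)\<in>\<theta>"
proof -
  assume o: "a \<le> x" and h: "(a,y)\<in>\<theta>" and g: "(inf x y, x)\<in>\<theta>"
  have "(inf x a, inf x y)\<in>\<theta>" by (rule infL'[OF h])
  then have "(a, inf x y)\<in>\<theta>" using o by (simp add: inf_absorb2)
  then show ?thesis using g by (rule T')
qed
lemma XXiii2: "y \<le> b \<Longrightarrow> (x,b)\<in>\<theta> \<Longrightarrow> (inf x y, x)\<in>\<theta> \<Longrightarrow> (y,b)\<in>\<theta>"
proof -
  assume o: "y \<le> b" and h: "(x,b)\<in>\<theta>" and g: "(inf x y, x)\<in>\<theta>"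
  have "(inf x y, inf b y)\<in>\<theta>" by (rule infR'[OF h])
  then have "(inf x y, y)\<in>\<theta>" using o by (simp add: inf_absorb2)
  then have "(y, inf x y)\<in>\<theta>" by (rule S')
  note q = this
  show ?thesis by (rule T'[OF T'[OF q g] h])
qed
lemma NNii1: "y \<le> b \<Longrightarrow> (x,b)\<in>\<theta> \<Longrightarrow> (x, sup x y)\<in>\<theta>"
proof -
  assume o: "y \<le> b" and h: "(x,b)\<in>\<theta>"
  have "(sup x y, sup b y)\<in>\<theta>" by (rule supR'[OF h])
  then have "(sup x y, b)\<in>\<theta>" using o by (simp add: sup_absorb1)
  note q = this
  show ?thesis by (rule T'[OF h S'[OF q]])
qed
lemma NNii2: "a \<le> x \<Longrightarrow> (a,y)\<in>\<theta> \<Longrightarrow> (x, sup x y)\<in>\<theta>"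
proof -
  assume o: "a \<le> x" and h: "(a,y)\<in>\<theta>"
  have "(sup x a, sup x y)\<in>\<theta>" by (rule supL'[OF h])
  then show ?thesis using o by (simp add: sup_absorb1)
qed
lemma NNiii1: "x \<le> b \<Longrightarrow> (y,b)\<in>\<theta> \<Longrightarrow> (x, sup x y)\<in>\<theta> \<Longrightarrow> (x,b)\<in>\<theta>"
proof -
  assume o: "x \<le> b" and h: "(y,b)\<in>\<theta>" and g: "(x, sup x y)\<in>\<theta>"
  have "(sup x y, sup x b)\<in>\<theta>" by (rule supL'[OF h])
  then have "(sup x y, b)\<in>\<theta>" using o by (simp add: sup_absorb2)
  note q = this
  show ?thesis by (rule T'[OF g q])
qed
lemma NNiii2: "a \<le> y \<Longrightarrow> (a,x)\<in>\<theta> \<Longrightarrow> (x, sup x y)\<in>\<theta> \<Longrightarrow> (a,y)\<in>\<theta>"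
proof -
  assume o: "a \<le> y" and h: "(a,x)\<in>\<theta>" and g: "(x, sup x y)\<in>\<theta>"
  have "(sup a y, sup x y)\<in>\<theta>" by (rule supR'[OF h])
  then have "(y, sup x y)\<in>\<theta>" using o by (simp add: sup_absorb2)
  note q = this
  show ?thesis by (rule T'[OF T'[OF h g] S'[OF q]])
qed
lemma XNii1: "a \<le> y \<Longrightarrow> (a,x)\<in>\<theta> \<Longrightarrow> (a, inf x y)\<in>\<theta>"
proof -
  assume o: "a \<le> y" and h: "(a,x)\<in>\<theta>"
  have "(inf a y, inf x y)\<in>\<theta>" by (rule infR'[OF h])
  then show ?thesis using o by (simp add: inf_absorb1)
qed
lemma XNii2: "a \<le> x \<Longrightarrow> (a,y)\<in>\<theta> \<Longrightarrow> (a, inf x y)\<in>\<theta>"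
proof -
  assume o: "a \<le> x" and h: "(a,y)\<in>\<theta>"
  have "(inf x a, inf x y)\<in>\<theta>" by (rule infL'[OF h])
  then show ?thesis using o by (simp add: inf_absorb2)
qed
lemma XNiii1: "x \<le> b \<Longrightarrow> (y,b)\<in>\<theta> \<Longrightarrow> (a, inf x y)\<in>\<theta> \<Longrightarrow> (a,x)\<in>\<theta>"
proof -
  assume o: "x \<le> b" and h: "(y,b)\<in>\<theta>" and g: "(a, inf x y)\<in>\<theta>"
  have "(inf x y, inf x b)\<in>\<theta>" by (rule infL'[OF h])
  then have "(inf x y, x)\<in>\<theta>" using o by (simp add: inf_absorb1)
  note q = this
  show ?thesis by (rule T'[OF g q])
qed
lemma XNiii2: "y \<le> b \<Longrightarrow> (x,b)\<in>\<theta> \<Longrightarrow> (a, inf x y)\<in>\<theta> \<Longrightarrow> (a,y)\<in>\<theta>"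
proof -
  assume o: "y \<le> b" and h: "(x,b)\<in>\<theta>" and g: "(a, inf x y)\<in>\<theta>"
  have "(inf x y, inf b y)\<in>\<theta>" by (rule infR'[OF h])
  then have "(inf x y, y)\<in>\<theta>" using o by (simp add: inf_absorb2)
  note q = this
  show ?thesis by (rule T'[OF g q])
qed
lemma NXii1: "y \<le> b \<Longrightarrow> (x,b)\<in>\<theta> \<Longrightarrow> (sup x y, b)\<in>\<theta>"
proof -
  assume o: "y \<le> b" and h: "(x,b)\<in>\<theta>"
  have "(sup x y, sup b y)\<in>\<theta>" by (rule supR'[OF h])
  then show ?thesis using o by (simp add: sup_absorb1)
qed
lemma NXii2: "x \<le> b \<Longrightarrow> (y,b)\<in>\<theta> \<Longrightarrow> (sup x y, b)\<in>\<theta>"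
proof -
  assume o: "x \<le> b" and h: "(y,b)\<in>\<theta>"
  have "(sup x y, sup x b)\<in>\<theta>" by (rule supL'[OF h])
  then show ?thesis using o by (simp add: sup_absorb2)
qed
lemma NXiii1: "a \<le> x \<Longrightarrow> (a,y)\<in>\<theta> \<Longrightarrow> (sup x y, b)\<in>\<theta> \<Longrightarrow> (x,b)\<in>\<theta>"
proof -
  assume o: "a \<le> x" and h: "(a,y)\<in>\<theta>" and g: "(sup x y, b)\<in>\<theta>"
  have "(sup x a, sup x y)\<in>\<theta>" by (rule supL'[OF h])
  then have "(x, sup x y)\<in>\<theta>" using o by (simp add: sup_absorb1)
  note q = this
  show ?thesis by (rule T'[OF q g])
qed
lemma NXiii2: "a \<le> y \<Longrightarrow> (a,x)\<in>\<theta> \<Longrightarrow> (sup x y, b)\<in>\<theta> \<Longrightarrow> (y,b)\<in>\<theta>"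
proof -
  assume o: "a \<le> y" and h: "(a,x)\<in>\<theta>" and g: "(sup x y, b)\<in>\<theta>"
  have "(sup a y, sup x y)\<in>\<theta>" by (rule supR'[OF h])
  then have "(y, sup x y)\<in>\<theta>" using o by (simp add: sup_absorb2)
  note q = this
  show ?thesis by (rule T'[OF q g])
qed

lemma XXX: "(inf x y, x)\<in>\<theta> \<Longrightarrow> (inf y w, y)\<in>\<theta> \<Longrightarrow> (inf x w, x)\<in>\<theta>"
proof -
  assume h1: "(inf x y, x)\<in>\<theta>" and h2: "(inf y w, y)\<in>\<theta>"
  have "(inf x y, inf x (inf y w))\<in>\<theta>" by (rule infL'[OF S'[OF h2]])
  note q = this
  have m: "(x, inf x (inf y w))\<in>\<theta>" by (rule T'[OF S'[OF h1] q])
  have "(inf x w, inf (inf x (inf y w)) w)\<in>\<theta>" by (rule infR'[OF m])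
  then have "(inf x w, inf x (inf y w))\<in>\<theta>" by (simp add: inf_aci)
  note q = this
  show ?thesis by (rule T'[OF q S'[OF m]])
qed
lemma NNN: "(x, sup x y)\<in>\<theta> \<Longrightarrow> (y, sup y w)\<in>\<theta> \<Longrightarrow> (x, sup x w)\<in>\<theta>"
proof -
  assume h1: "(x, sup x y)\<in>\<theta>" and h2: "(y, sup y w)\<in>\<theta>"
  have "(sup x y, sup x (sup y w))\<in>\<theta>" by (rule supL'[OF h2])
  note q = this
  have m: "(x, sup x (sup y w))\<in>\<theta>" by (rule T'[OF h1 q])
  have "(sup x w, sup (sup x (sup y w)) w)\<in>\<theta>" by (rule supR'[OF m])
  then have "(sup x w, sup x (sup y w))\<in>\<theta>" by (simp add: sup_aci)
  note q = this
  show ?thesis by (rule T'[OF m S'[OF q]])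
qed
lemma XXN: "a \<le> x \<Longrightarrow> (inf x y, x)\<in>\<theta> \<Longrightarrow> (a, inf y w)\<in>\<theta> \<Longrightarrow> (a, inf x w)\<in>\<theta>"
proof -
  assume o: "a \<le> x" and h1: "(inf x y, x)\<in>\<theta>" and h2: "(a, inf y w)\<in>\<theta>"
  have "(inf x w, inf (inf x y) w)\<in>\<theta>" by (rule infR'[OF S'[OF h1]])
  then have e1: "(inf x w, inf x (inf y w))\<in>\<theta>" by (simp add: inf_aci)
  have "(inf x (inf y w), inf x a)\<in>\<theta>" by (rule infL'[OF S'[OF h2]])
  then have "(inf x (inf y w), a)\<in>\<theta>" using o by (simp add: inf_absorb2)
  note q = this
  show ?thesis by (rule S'[OF T'[OF e1 q]])
qed
lemma XNN: "a \<le> w \<Longrightarrow> (a, inf x y)\<in>\<theta> \<Longrightarrow> (y, sup y w)\<in>\<theta> \<Longrightarrow> (a, inf x w)\<in>\<theta>"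
proof -
  assume o: "a \<le> w" and h1: "(a, inf x y)\<in>\<theta>" and h2: "(y, sup y w)\<in>\<theta>"
  have "(inf (inf x w) y, inf (inf x w) (sup y w))\<in>\<theta>" by (rule infL'[OF h2])
  moreover have "inf (inf x w) (sup y w) = inf x w"
    by (metis inf.absorb_iff1 inf.cobounded2 inf.coboundedI2 sup.cobounded2)
  ultimately have e1: "(inf (inf x y) w, inf x w)\<in>\<theta>" by (simp add: inf_aci)
  have "(inf a w, inf (inf x y) w)\<in>\<theta>" by (rule infR'[OF h1])
  then have "(a, inf (inf x y) w)\<in>\<theta>" using o by (simp add: inf_absorb1)
  note q = this
  show ?thesis by (rule T'[OF q e1])
qed
lemma NXX: "w \<le> b \<Longrightarrow> (sup x y, b)\<in>\<theta> \<Longrightarrow> (inf y w, y)\<in>\<theta> \<Longrightarrow> (sup x w, b)\<in>\<theta>"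
proof -
  assume o: "w \<le> b" and h1: "(sup x y, b)\<in>\<theta>" and h2: "(inf y w, y)\<in>\<theta>"
  have "(sup (sup x w) (inf y w), sup (sup x w) y)\<in>\<theta>" by (rule supL'[OF h2])
  moreover have "sup (sup x w) (inf y w) = sup x w"
    by (metis inf.cobounded2 sup.absorb_iff1 sup.coboundedI2 sup_commute)
  ultimately have e1: "(sup x w, sup (sup x y) w)\<in>\<theta>" by (simp add: sup_aci)
  have "(sup (sup x y) w, sup b w)\<in>\<theta>" by (rule supR'[OF h1])
  then have "(sup (sup x y) w, b)\<in>\<theta>" using o by (simp add: sup_absorb1)
  note q = this
  show ?thesis by (rule T'[OF e1 q])
qed
lemma NXN: "x \<le> b \<Longrightarrow> (x, sup x y)\<in>\<theta> \<Longrightarrow> (sup y w, b)\<in>\<theta> \<Longrightarrow> (sup x w, b)\<in>\<theta>"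
proof -
  assume o: "x \<le> b" and h1: "(x, sup x y)\<in>\<theta>" and h2: "(sup y w, b)\<in>\<theta>"
  have "(sup x w, sup (sup x y) w)\<in>\<theta>" by (rule supR'[OF h1])
  then have e1: "(sup x w, sup x (sup y w))\<in>\<theta>" by (simp add: sup_aci)
  have "(sup x (sup y w), sup x b)\<in>\<theta>" by (rule supL'[OF h2])
  then have "(sup x (sup y w), b)\<in>\<theta>" using o by (simp add: sup_absorb2)
  note q = this
  show ?thesis by (rule T'[OF e1 q])
qed

lemma uv1: "(u,v)\<in>\<theta> \<Longrightarrow> (inf u v, sup u v)\<in>\<theta>"
proof -
  assume h: "(u,v)\<in>\<theta>"
  have "(inf u u, inf u v)\<in>\<theta>" "(sup u u, sup u v)\<in>\<theta>" by (rule infL'[OF h], rule supL'[OF h])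
  then have "(u, inf u v)\<in>\<theta>" "(u, sup u v)\<in>\<theta>" by simp_all
  note q = this
  show ?thesis by (rule T'[OF S'[OF q(1)] q(2)])
qed
lemma uv2: "(inf u v, sup u v)\<in>\<theta> \<Longrightarrow> (u,v)\<in>\<theta>"
proof -
  assume h: "(inf u v, sup u v)\<in>\<theta>"
  have "(sup u (inf u v), sup u (sup u v))\<in>\<theta>" "(sup v (inf u v), sup v (sup u v))\<in>\<theta>"
    by (rule supL'[OF h], rule supL'[OF h])
  moreover have "sup v (inf u v) = v" by (rule sup.absorb1) (rule inf_le2)
  moreover have "sup v (sup u v) = sup u v" by (simp add: sup_aci)
  ultimately have "(u, sup u v)\<in>\<theta>" "(v, sup u v)\<in>\<theta>" by (simp_all add: sup_aci)
  note q = this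
  show ?thesis by (rule T'[OF q(1) S'[OF q(2)]])
qed
lemma norm1: "(a,z)\<in>\<theta> \<Longrightarrow> (a, inf (sup z a) b)\<in>\<theta>" if "a \<le> b"
proof -
  assume h: "(a,z)\<in>\<theta>"
  have "(inf (sup a a) b, inf (sup z a) b)\<in>\<theta>" by (rule infR'[OF supR'[OF h]])
  then show ?thesis using that by (simp add: inf_absorb1)
qed
lemma norm2: "(z,b)\<in>\<theta> \<Longrightarrow> (inf (sup z a) b, b)\<in>\<theta>" if "a \<le> b"
proof -
  assume h: "(z,b)\<in>\<theta>"
  have "(inf (sup z a) b, inf (sup b a) b)\<in>\<theta>" by (rule infR'[OF supR'[OF h]])
  then show ?thesis using that by (simp add: sup_absorb1)
qed
lemma sub1: "a \<le> z \<Longrightarrow> z \<le> b \<Longrightarrow> (a,b)\<in>\<theta> \<Longrightarrow> (a,z)\<in>\<theta>"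
proof -
  assume o: "a \<le> z" "z \<le> b" and h: "(a,b)\<in>\<theta>"
  have "(inf z a, inf z b)\<in>\<theta>" by (rule infL'[OF h])
  then show ?thesis using o by (simp add: inf_absorb1 inf_absorb2)
qed
lemma sub2: "a \<le> z \<Longrightarrow> z \<le> b \<Longrightarrow> (a,b)\<in>\<theta> \<Longrightarrow> (z,b)\<in>\<theta>"
proof -
  assume o: "a \<le> z" "z \<le> b" and h: "(a,b)\<in>\<theta>"
  have "(sup z a, sup z b)\<in>\<theta>" by (rule supL'[OF h])
  then show ?thesis using o by (simp add: sup_absorb1 sup_absorb2)
qed
end


lemma Theta_uv: "Theta u v = Theta (inf u v) (sup u v)"
  apply (rule equalityI)
   apply (rule Theta_le_Theta, erule uv2, assumption)
  apply (rule Theta_le_Theta, erule uv1, assumption)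
  done

lemma join_eq1: "a \<le> z \<Longrightarrow> z \<le> b \<Longrightarrow> cong_join (Theta a z) (Theta z b) = Theta a b"
  apply (rule equalityI)
   apply (rule cj_least[OF Theta_cong])
    apply (rule Theta_le_Theta, erule sub1, assumption+)
   apply (rule Theta_le_Theta, erule sub2, assumption+)
  apply (rule Theta_le[OF cj_cong])
  apply (rule T[OF cj_cong])
   apply (rule subsetD[OF cj_ub1 Theta_mem])
  apply (rule subsetD[OF cj_ub2 Theta_mem])
  done

lemma join_eq2: "a \<le> z \<Longrightarrow> z \<le> b \<Longrightarrow> cong_join (Theta z b) (Theta a z) = Theta a b"
  using join_eq1[of a z b] unfolding cong_join_def by (simp add: Un_commute)

lemma Con_c_cong: "\<theta> \<in> Con_c \<Longrightarrow> lattice_cong \<theta>" unfolding Con_c_def by auto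

theorem theorem2p4:
  fixes u v :: "'a::lattice" and I :: "'i set"
    and \<alpha> \<beta> :: "'i \<Rightarrow> ('a \<times> 'a) set"
  assumes "has_almost_permutable_congruences TYPE('a)"
    and "\<forall>i\<in>I. \<alpha> i \<in> Con_c \<and> \<beta> i \<in> Con_c \<and> cong_join (\<alpha> i) (\<beta> i) = Theta u v"
  shows "URP1m_at_family Con_c cong_join (\<subseteq>) (Theta u v) I \<alpha> \<beta>"
proof -
  define a where "a = inf u v"
  define b where "b = sup u v"
  have ab: "a \<le> b" unfolding a_def b_def by (meson inf_le1 le_supI1)
  have Tuv: "Theta u v = Theta a b" unfolding a_def b_def by (rule Theta_uv)
  have ca: "lattice_cong (\<alpha> i)" "lattice_cong (\<beta> i)" if "i \<in> I" for i
    using assms(2) that Con_c_cong by blast+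
  have ex: "\<exists>z. a \<le> z \<and> z \<le> b \<and> (((a,z)\<in>\<alpha> i \<and> (z,b)\<in>\<beta> i) \<or> ((a,z)\<in>\<beta> i \<and> (z,b)\<in>\<alpha> i))"
    if i: "i \<in> I" for i
  proof -
    have "cong_join (\<alpha> i) (\<beta> i) = (\<alpha> i O \<beta> i) \<union> (\<beta> i O \<alpha> i)"
      using assms(1) ca[OF i] unfolding has_almost_permutable_congruences_def almost_permutable_def by blast
    moreover have "(a,b) \<in> cong_join (\<alpha> i) (\<beta> i)" using assms(2) i Tuv Theta_mem by metis
    ultimately obtain z where "((a,z)\<in>\<alpha> i \<and> (z,b)\<in>\<beta> i) \<or> ((a,z)\<in>\<beta> i \<and> (z,b)\<in>\<alpha> i)" by blast
    then show ?thesis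
      using norm1[OF ca(1)[OF i] ab] norm2[OF ca(1)[OF i] ab] norm1[OF ca(2)[OF i] ab] norm2[OF ca(2)[OF i] ab]
      by (intro exI[of _ "inf (sup z a) b"]) (auto simp: ab le_infI1)
  qed
  define X where "X = {i\<in>I. \<exists>z. a \<le> z \<and> z \<le> b \<and> (a,z)\<in>\<alpha> i \<and> (z,b)\<in>\<beta> i}"
  define z where "z i = (if i \<in> X then (SOME z. a \<le> z \<and> z \<le> b \<and> (a,z)\<in>\<alpha> i \<and> (z,b)\<in>\<beta> i)
      else (SOME z. a \<le> z \<and> z \<le> b \<and> (a,z)\<in>\<beta> i \<and> (z,b)\<in>\<alpha> i))" for i
  have zX: "a \<le> z i \<and> z i \<le> b \<and> (a,z i)\<in>\<alpha> i \<and> (z i,b)\<in>\<beta> i" if "i \<in> X" for i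
  proof -
    have "\<exists>z. a \<le> z \<and> z \<le> b \<and> (a,z)\<in>\<alpha> i \<and> (z,b)\<in>\<beta> i" using that X_def by blast
    from someI_ex[OF this] show ?thesis using that z_def by simp
  qed
  have zN: "a \<le> z i \<and> z i \<le> b \<and> (a,z i)\<in>\<beta> i \<and> (z i,b)\<in>\<alpha> i" if h: "i \<in> I" "i \<notin> X" for i
  proof -
    have "\<exists>z. a \<le> z \<and> z \<le> b \<and> (a,z)\<in>\<beta> i \<and> (z,b)\<in>\<alpha> i" using h X_def ex[OF h(1)] by blast
    from someI_ex[OF this] show ?thesis using h z_def by simp
  qed
  have zl: "a \<le> z i" and zu: "z i \<le> b" if "i \<in> I" for i using zX zN that by blast+
  define \<alpha>' where "\<alpha>' i = (if i \<in> X then Theta a (z i) else Theta (z i) b)" for i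
  define \<beta>' where "\<beta>' i = (if i \<in> X then Theta (z i) b else Theta a (z i))" for i
  define \<gamma> where "\<gamma> i j = (if i \<in> X then (if j \<in> X then Theta (inf (z i) (z j)) (z i) else Theta a (inf (z i) (z j)))
     else (if j \<in> X then Theta (sup (z i) (z j)) b else Theta (z i) (sup (z i) (z j))))" for i j
  have P1: "\<forall>i\<in>I. \<alpha>' i \<in> Con_c \<and> \<beta>' i \<in> Con_c \<and> \<alpha>' i \<subseteq> \<alpha> i \<and> \<beta>' i \<subseteq> \<beta> i \<and>
               cong_join (\<alpha>' i) (\<beta>' i) = Theta u v"
  proof
    fix i assume i: "i \<in> I"
    show "\<alpha>' i \<in> Con_c \<and> \<beta>' i \<in> Con_c \<and> \<alpha>' i \<subseteq> \<alpha> i \<and> \<beta>' i \<subseteq> \<beta> i \<and>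
               cong_join (\<alpha>' i) (\<beta>' i) = Theta u v"
    proof (cases "i \<in> X")
      case True
      then show ?thesis unfolding \<alpha>'_def \<beta>'_def Tuv using zX[OF True] ca[OF i]
        by (simp add: Theta_compact Theta_le join_eq1)
    next
      case False
      then show ?thesis unfolding \<alpha>'_def \<beta>'_def Tuv using zN[OF i False] ca[OF i]
        by (simp add: Theta_compact Theta_le join_eq2)
    qed
  qed
  have P2: "\<forall>i\<in>I. \<forall>j\<in>I. \<gamma> i j \<in> Con_c \<and> \<gamma> i j \<subseteq> \<alpha>' i \<and> \<gamma> i j \<subseteq> \<beta>' j"
  proof (intro ballI)
    fix i j assume i: "i \<in> I" and j: "j \<in> I"
    note o = zl[OF i] zu[OF i] zl[OF j] zu[OF j]
    consider (XX) "i\<in>X" "j\<in>X" | (XN) "i\<in>X" "j\<notin>X" | (NX) "i\<notin>X" "j\<in>X" | (NN) "i\<notin>X" "j\<notin>X" by blast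
    then show "\<gamma> i j \<in> Con_c \<and> \<gamma> i j \<subseteq> \<alpha>' i \<and> \<gamma> i j \<subseteq> \<beta>' j"
    proof cases
      case XX
      then have e: "\<gamma> i j = Theta (inf (z i) (z j)) (z i)" "\<alpha>' i = Theta a (z i)" "\<beta>' j = Theta (z j) b"
        by (simp_all add: \<gamma>_def \<alpha>'_def \<beta>'_def)
      show ?thesis unfolding e
        apply (intro conjI Theta_compact)
         apply (rule Theta_le_Theta, metis XXii1 o)
        apply (rule Theta_le_Theta, metis XXii2 o)
        done
    next
      case XN
      then have e: "\<gamma> i j = Theta a (inf (z i) (z j))" "\<alpha>' i = Theta a (z i)" "\<beta>' j = Theta a (z j)"
        by (simp_all add: \<gamma>_def \<alpha>'_def \<beta>'_def)
      show ?thesis unfolding e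
        apply (intro conjI Theta_compact)
         apply (rule Theta_le_Theta, metis XNii1 o)
        apply (rule Theta_le_Theta, metis XNii2 o)
        done
    next
      case NX
      then have e: "\<gamma> i j = Theta (sup (z i) (z j)) b" "\<alpha>' i = Theta (z i) b" "\<beta>' j = Theta (z j) b"
        by (simp_all add: \<gamma>_def \<alpha>'_def \<beta>'_def)
      show ?thesis unfolding e
        apply (intro conjI Theta_compact)
         apply (rule Theta_le_Theta, metis NXii1 o)
        apply (rule Theta_le_Theta, metis NXii2 o)
        done
    next
      case NN
      then have e: "\<gamma> i j = Theta (z i) (sup (z i) (z j))" "\<alpha>' i = Theta (z i) b" "\<beta>' j = Theta a (z j)"
        by (simp_all add: \<gamma>_def \<alpha>'_def \<beta>'_def)
      show ?thesis unfolding e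
        apply (intro conjI Theta_compact)
         apply (rule Theta_le_Theta, metis NNii1 o)
        apply (rule Theta_le_Theta, metis NNii2 o)
        done
    qed
  qed
  have P3: "\<forall>i\<in>I. \<forall>j\<in>I. \<alpha>' i \<subseteq> cong_join (\<alpha>' j) (\<gamma> i j) \<and> \<beta>' j \<subseteq> cong_join (\<beta>' i) (\<gamma> i j)"
  proof (intro ballI)
    fix i j assume i: "i \<in> I" and j: "j \<in> I"
    note o = zl[OF i] zu[OF i] zl[OF j] zu[OF j]
    consider (XX) "i\<in>X" "j\<in>X" | (XN) "i\<in>X" "j\<notin>X" | (NX) "i\<notin>X" "j\<in>X" | (NN) "i\<notin>X" "j\<notin>X" by blast
    then show "\<alpha>' i \<subseteq> cong_join (\<alpha>' j) (\<gamma> i j) \<and> \<beta>' j \<subseteq> cong_join (\<beta>' i) (\<gamma> i j)"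
    proof cases
      case XX
      then have e: "\<gamma> i j = Theta (inf (z i) (z j)) (z i)" "\<alpha>' i = Theta a (z i)" "\<beta>' j = Theta (z j) b"
        "\<alpha>' j = Theta a (z j)" "\<beta>' i = Theta (z i) b"
        by (simp_all add: \<gamma>_def \<alpha>'_def \<beta>'_def)
      show ?thesis unfolding e
        apply (intro conjI)
         apply (rule Theta_le_join, metis XXiii1 o)
        apply (rule Theta_le_join, metis XXiii2 o)
        done
    next
      case XN
      then have e: "\<gamma> i j = Theta a (inf (z i) (z j))" "\<alpha>' i = Theta a (z i)" "\<beta>' j = Theta a (z j)"
        "\<alpha>' j = Theta (z j) b" "\<beta>' i = Theta (z i) b"
        by (simp_all add: \<gamma>_def \<alpha>'_def \<beta>'_def)
      show ?thesis unfolding e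
        apply (intro conjI)
         apply (rule Theta_le_join, metis XNiii1 o)
        apply (rule Theta_le_join, metis XNiii2 o)
        done
    next
      case NX
      then have e: "\<gamma> i j = Theta (sup (z i) (z j)) b" "\<alpha>' i = Theta (z i) b" "\<beta>' j = Theta (z j) b"
        "\<alpha>' j = Theta a (z j)" "\<beta>' i = Theta a (z i)"
        by (simp_all add: \<gamma>_def \<alpha>'_def \<beta>'_def)
      show ?thesis unfolding e
        apply (intro conjI)
         apply (rule Theta_le_join, metis NXiii1 o)
        apply (rule Theta_le_join, metis NXiii2 o)
        done
    next
      case NN
      then have e: "\<gamma> i j = Theta (z i) (sup (z i) (z j))" "\<alpha>' i = Theta (z i) b" "\<beta>' j = Theta a (z j)"
        "\<alpha>' j = Theta (z j) b" "\<beta>' i = Theta a (z i)"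
        by (simp_all add: \<gamma>_def \<alpha>'_def \<beta>'_def)
      show ?thesis unfolding e
        apply (intro conjI)
         apply (rule Theta_le_join, metis NNiii1 o)
        apply (rule Theta_le_join, metis NNiii2 o)
        done
    qed
  qed
  have P4: "\<forall>i\<in>I. \<forall>j\<in>I. \<forall>k\<in>I.
          (({i, k} \<subseteq> X \<longrightarrow> j \<in> X) \<and> ({i, k} \<subseteq> I - X \<longrightarrow> j \<in> I - X)) \<longrightarrow>
          \<gamma> i k \<subseteq> cong_join (\<gamma> i j) (\<gamma> j k)"
  proof (intro ballI impI)
    fix i j k assume i: "i \<in> I" and j: "j \<in> I" and k: "k \<in> I"
      and c: "({i, k} \<subseteq> X \<longrightarrow> j \<in> X) \<and> ({i, k} \<subseteq> I - X \<longrightarrow> j \<in> I - X)"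
    note o = zl[OF i] zu[OF i] zl[OF j] zu[OF j] zl[OF k] zu[OF k]
    consider (cXXX) "i\<in>X" "j\<in>X" "k\<in>X" | (cXXN) "i\<in>X" "j\<in>X" "k\<notin>X"
      | (cXNN) "i\<in>X" "j\<notin>X" "k\<notin>X" | (cNNN) "i\<notin>X" "j\<notin>X" "k\<notin>X"
      | (cNNX) "i\<notin>X" "j\<notin>X" "k\<in>X" | (cNXX) "i\<notin>X" "j\<in>X" "k\<in>X"
      using c i j k by blast
    then show "\<gamma> i k \<subseteq> cong_join (\<gamma> i j) (\<gamma> j k)"
    proof cases
      case cXXX
      then have e: "\<gamma> i k = Theta (inf (z i) (z k)) (z i)" "\<gamma> i j = Theta (inf (z i) (z j)) (z i)"
        "\<gamma> j k = Theta (inf (z j) (z k)) (z j)" by (simp_all add: \<gamma>_def)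
      show ?thesis unfolding e by (rule Theta_le_join, metis XXX)
    next
      case cXXN
      then have e: "\<gamma> i k = Theta a (inf (z i) (z k))" "\<gamma> i j = Theta (inf (z i) (z j)) (z i)"
        "\<gamma> j k = Theta a (inf (z j) (z k))" by (simp_all add: \<gamma>_def)
      show ?thesis unfolding e by (rule Theta_le_join, metis XXN o)
    next
      case cXNN
      then have e: "\<gamma> i k = Theta a (inf (z i) (z k))" "\<gamma> i j = Theta a (inf (z i) (z j))"
        "\<gamma> j k = Theta (z j) (sup (z j) (z k))" by (simp_all add: \<gamma>_def)
      show ?thesis unfolding e by (rule Theta_le_join, metis XNN o)
    next
      case cNNN
      then have e: "\<gamma> i k = Theta (z i) (sup (z i) (z k))" "\<gamma> i j = Theta (z i) (sup (z i) (z j))"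
        "\<gamma> j k = Theta (z j) (sup (z j) (z k))" by (simp_all add: \<gamma>_def)
      show ?thesis unfolding e by (rule Theta_le_join, metis NNN)
    next
      case cNNX
      then have e: "\<gamma> i k = Theta (sup (z i) (z k)) b" "\<gamma> i j = Theta (z i) (sup (z i) (z j))"
        "\<gamma> j k = Theta (sup (z j) (z k)) b" by (simp_all add: \<gamma>_def)
      show ?thesis unfolding e by (rule Theta_le_join, metis NXN o)
    next
      case cNXX
      then have e: "\<gamma> i k = Theta (sup (z i) (z k)) b" "\<gamma> i j = Theta (sup (z i) (z j)) b"
        "\<gamma> j k = Theta (inf (z j) (z k)) (z j)" by (simp_all add: \<gamma>_def)
      show ?thesis unfolding e by (rule Theta_le_join, metis NXX o)
    qed
  qed
  show ?thesis unfolding URP1m_at_family_def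
    apply (rule exI[of _ X], rule exI[of _ \<alpha>'], rule exI[of _ \<beta>'], rule exI[of _ \<gamma>])
    using P1 P2 P3 P4 X_def by blast
qed

end
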